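(* Let $\{c_n\}_{n\in\mathbb Z}$ be complex numbers such that $c_n+c_{-n}\in M(\theta_0)$ for all $n\ge1$ for some $\theta_0\in[0,\pi/2)$, and $\{c_n\}_{n\ge0}\in NBVS$. Let $S_n(x)=\sum_{k=-n}^nc_ke^{ikx}$. If $S_n$ converges uniformly on $\mathbb R$ to a (continuous, $2\pi$-periodic) function $f$, i.e. $\lim_{n\to\infty}\|f-S_n\|=0$ with $\|g\|=\max_x|g(x)|$, then $\lim_{n\to\infty}nc_n=0$.
   Context: For $\theta_0\in[0,\pi/2)$ let $M(\theta_0)=\{z\in\mathbb C: |\arg z|\le\theta_0\}$ (with $0\in M(\theta_0)$). Write $\Delta c_n=c_n-c_{n+1}$. A complex sequence $\mathbf C=\{c_n\}$ belongs to $NBVS$ if there is $\theta_0\in[0,\pi/2)$ with $c_n\in M(\theta_0)$ for all $n\ge1$ and a constant $K(\mathbf C)>0$ such that $\sum_{n=m}^{2m}|\Delta c_n|\le K(\mathbf C)\big(|c_m|+|c_{2m}|\big)$ for all $m\ge1$. *)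

theory Defs
  imports "HOL-Analysis.Analysis"
begin

definition sector :: "real \<Rightarrow> complex set" where
  "sector \<theta>0 = {z. z = 0 \<or> \<bar>Arg z\<bar> \<le> \<theta>0}"

definition NBVS :: "(nat \<Rightarrow> complex) \<Rightarrow> bool" where
  "NBVS c \<longleftrightarrow>
     (\<exists>\<theta>0. 0 \<le> \<theta>0 \<and> \<theta>0 < pi/2 \<and> (\<forall>n\<ge>1. c n \<in> sector \<theta>0)) \<and>
     (\<exists>K>0. \<forall>m\<ge>1. (\<Sum>n=m..2*m. norm (c n - c (Suc n))) \<le> K * (norm (c m) + norm (c (2*m))))"

end

theory Submission
  imports Defs
begin


lemma sector_re:
  assumes "0 \<le> \<theta>" "\<theta> < pi/2" "z \<in> sector \<theta>"
  shows "cos \<theta> * norm z \<le> Re z"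
proof (cases "z = 0")
  case True then show ?thesis by simp
next
  case False
  then have a: "\<bar>Arg z\<bar> \<le> \<theta>" using assms(3) by (auto simp: sector_def)
  have "cos \<theta> \<le> cos \<bar>Arg z\<bar>"
    by (rule cos_monotone_0_pi_le) (use a assms in auto)
  also have "cos \<bar>Arg z\<bar> = cos (Arg z)" by (simp add: abs_if)
  also have "\<dots> = Re z / norm z" using False by (rule cos_Arg)
  finally show ?thesis using False by (simp add: field_simps)
qed

lemma sector_sum:
  assumes "0 \<le> \<theta>" "\<theta> < pi/2" "\<And>k. k \<in> A \<Longrightarrow> a k \<in> sector \<theta>"
    "\<And>k. k \<in> A \<Longrightarrow> w k \<ge> 0"
  shows "cos \<theta> * (\<Sum>k\<in>A. w k * norm (a k)) \<le> norm (\<Sum>k\<in>A. of_real (w k) * a k)"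
proof -
  have "cos \<theta> * (\<Sum>k\<in>A. w k * norm (a k)) = (\<Sum>k\<in>A. w k * (cos \<theta> * norm (a k)))"
    by (simp add: sum_distrib_left algebra_simps)
  also have "\<dots> \<le> (\<Sum>k\<in>A. w k * Re (a k))"
    by (rule sum_mono, rule mult_left_mono) (use sector_re assms in auto)
  also have "\<dots> = Re (\<Sum>k\<in>A. of_real (w k) * a k)" by (simp add: Re_sum)
  also have "\<dots> \<le> norm (\<Sum>k\<in>A. of_real (w k) * a k)" by (rule complex_Re_le_cmod)
  finally show ?thesis .
qed

lemma telesc:
  fixes d :: "nat \<Rightarrow> complex"
  shows "m \<le> N \<Longrightarrow> norm (d N) \<le> norm (d m) + (\<Sum>n\<in>{m..<N}. norm (d n - d (Suc n)))"
proof (induction N)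
  case 0 then show ?case by simp
next
  case (Suc N)
  show ?case
  proof (cases "m = Suc N")
    case True then show ?thesis by simp
  next
    case False
    then have "m \<le> N" using Suc by simp
    have "norm (d (Suc N)) \<le> norm (d N) + norm (d N - d (Suc N))"
      using norm_triangle_ineq4[of "d N" "d N - d (Suc N)"] by simp
    also have "\<dots> \<le> norm (d m) + (\<Sum>n\<in>{m..<N}. norm (d n - d (Suc n))) + norm (d N - d (Suc N))"
      using Suc.IH[OF \<open>m \<le> N\<close>] by simp
    finally show ?thesis using \<open>m \<le> N\<close> by (simp add: add.assoc)
  qed
qed



lemma exp_id: "exp (\<i> * of_int (int n) * of_real x) = of_real (cos (real n * x)) + \<i> * of_real (sin (real n * x))"
proof -
  have "\<i> * of_int (int n) * of_real x = \<i> * of_real (real n * x)" by simp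
  then show ?thesis by (simp only: exp_Euler cos_of_real sin_of_real)
qed

lemma exp_id2: "exp (\<i> * of_int (- int n) * of_real x) = of_real (cos (real n * x)) - \<i> * of_real (sin (real n * x))"
proof -
  have "\<i> * of_int (- int n) * of_real x = \<i> * of_real (- (real n * x))" by simp
  then show ?thesis by (simp only: exp_Euler cos_of_real sin_of_real cos_minus sin_minus) simp
qed

lemma term_id: "c1 * exp(\<i> * of_int (int n) * of_real x) + c2 * exp(\<i> * of_int (- int n) * of_real x) =
   (c1 + c2) * (of_real (cos (real n * x)) - \<i> * of_real (sin (real n * x))) + 2 * \<i> * (of_real (sin (real n * x)) * c1)"
  unfolding exp_id exp_id2 by (simp add: algebra_simps)

lemma term_id3: "c1 * exp(\<i> * of_int (int n) * of_real x) + c2 * exp(\<i> * of_int (- int n) * of_real x)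
  + (c1 * exp(\<i> * of_int (int n) * of_real (-x)) + c2 * exp(\<i> * of_int (- int n) * of_real (-x))) =
   2 * (of_real (cos (real n * x)) * (c1 + c2))"
  unfolding exp_id exp_id2 by (simp add: algebra_simps)

lemma norm_cs: "norm (of_real (cos t) - \<i> * of_real (sin t)) = 1"
  by (simp add: cmod_def)

lemma psum:
  fixes F :: "int \<Rightarrow> complex"
  shows "(\<Sum>k\<in>{-int n..int n}. F k) = F 0 + (\<Sum>k\<in>{1..n}. F (int k) + F (- int k))"
proof (induction n)
  case 0 then show ?case by simp
next
  case (Suc n)
  have e: "{-int (Suc n)..int (Suc n)} = insert (int (Suc n)) (insert (- int (Suc n)) {-int n..int n})"
    by auto
  show ?case unfolding e using Suc by (simp add: algebra_simps)
qed


theorem lemma2: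
  fixes c :: "int \<Rightarrow> complex" and f :: "real \<Rightarrow> complex" and \<theta>0 :: real
  assumes "0 \<le> \<theta>0" and "\<theta>0 < pi/2"
    and "\<And>n::int. n \<ge> 1 \<Longrightarrow> c n + c (-n) \<in> sector \<theta>0"
    and "NBVS (\<lambda>n. c (int n))"
    and "uniform_limit UNIV
           (\<lambda>n x. \<Sum>k\<in>{-int n..int n}. c k * exp (\<i> * of_int k * of_real x)) f sequentially"
  shows "(\<lambda>n. of_nat n * c (int n)) \<longlonglongrightarrow> 0"
proof -
  define d where "d n = c (int n)" for n
  define a where "a n = c (int n) + c (- int n)" for n
  define S where "S n x = (\<Sum>k\<in>{-int n..int n}. c k * exp (\<i> * of_int k * of_real x))" for n x
  define g where "g n x = c (int n) * exp (\<i> * of_int (int n) * of_real x) + c (- int n) * exp (\<i> * of_int (- int n) * of_real x)" for n x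
  define G where "G m x = (\<Sum>k\<in>{m<..5*m}. g k x)" for m x
  define T where "T m = (\<Sum>k\<in>{m<..5*m}. norm (d k))" for m
  obtain \<theta>1 where th1: "0 \<le> \<theta>1" "\<theta>1 < pi/2" "\<And>n. n \<ge> 1 \<Longrightarrow> d n \<in> sector \<theta>1"
    using assms(4) unfolding NBVS_def d_def by blast
  obtain K where K: "K > 0" "\<And>m. m \<ge> 1 \<Longrightarrow> (\<Sum>n=m..2*m. norm (d n - d (Suc n))) \<le> K * (norm (d m) + norm (d (2*m)))"
    using assms(4) unfolding NBVS_def d_def by blast
  have asec: "a n \<in> sector \<theta>0" if "n \<ge> 1" for n
    using assms(3)[of "int n"] that unfolding a_def by simp
  have Sg: "S n x = c 0 + (\<Sum>k\<in>{1..n}. g k x)" for n x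
    unfolding S_def g_def by (subst psum) simp
  have SG: "S (5*m) x - S m x = G m x" for m x
  proof -
    have e: "{1..5*m} = {1..m} \<union> {m<..5*m}" by auto
    have "(\<Sum>k\<in>{1..5*m}. g k x) = (\<Sum>k\<in>{1..m}. g k x) + G m x"
      unfolding G_def e by (rule sum.union_disjoint) auto
    then show ?thesis unfolding Sg by simp
  qed
  have Gsmall: "\<exists>N0. \<forall>m\<ge>N0. \<forall>x. norm (G m x) \<le> E" if "E > 0" for E
  proof -
    have "\<forall>\<^sub>F n in sequentially. \<forall>x\<in>UNIV. dist (S n x) (f x) < E/2"
      using assms(5)[unfolded uniform_limit_iff, rule_format, of "E/2"] \<open>E > 0\<close>
      unfolding S_def by simp
    then obtain N0 where N0: "\<And>n x. n \<ge> N0 \<Longrightarrow> dist (S n x) (f x) < E/2"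
      unfolding eventually_sequentially by blast
    have "norm (G m x) \<le> E" if "m \<ge> N0" for m x
    proof -
      have "norm (G m x) = dist (S (5*m) x) (S m x)" using SG[of m x] by (simp add: dist_norm)
      also have "\<dots> \<le> dist (S (5*m) x) (f x) + dist (S m x) (f x)" by (rule dist_triangle2)
      also have "\<dots> < E" using N0[of m x] N0[of "5*m" x] that by simp
      finally show ?thesis by simp
    qed
    then show ?thesis by blast
  qed
  have c0: "cos \<theta>0 > 0" using assms(1,2) by (intro cos_gt_zero_pi) auto
  have c1: "cos \<theta>1 > 0" using th1 by (intro cos_gt_zero_pi) auto
  define s0 where "s0 = sin (1/5::real)"
  have s0: "s0 > 0" unfolding s0_def using pi_gt3 by (intro sin_gt_zero) auto
  have gsum: "g k x + g k (-x) = 2 * (of_real (cos (real k * x)) * a k)" for k x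
    unfolding g_def a_def by (rule term_id3)
  have gid: "g k x = a k * (of_real (cos (real k * x)) - \<i> * of_real (sin (real k * x))) + 2 * \<i> * (of_real (sin (real k * x)) * d k)" for k x
    unfolding g_def a_def d_def by (rule term_id)
  have rk: "real m < real k" "real k \<le> 5 * real m" if "k \<in> {m<..5*m}" for k m
    using that by auto
  have Abound: "cos \<theta>0 * (\<Sum>k\<in>{m<..5*m}. norm (a k)) \<le> 2 * E"
    if "m \<ge> 1" "\<And>x. norm (G m x) \<le> E" for m E
  proof -
    define x0 where "x0 = 1 / (10 * real m)"
    have m0: "real m > 0" using \<open>m \<ge> 1\<close> by simp
    have cosk: "cos (real k * x0) \<ge> 1/2" if "k \<in> {m<..5*m}" for k
    proof -
      have "real k * x0 = real k / (10 * real m)" unfolding x0_def by simp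
      also have "\<dots> \<le> 1/2" using rk(2)[OF that] m0 by (simp add: field_simps)
      finally have u: "real k * x0 \<le> 1/2" .
      have "0 \<le> real k * x0" unfolding x0_def by simp
      then have "cos (pi/3) \<le> cos (real k * x0)" using pi_gt3 u
        by (intro cos_monotone_0_pi_le) auto
      then show ?thesis by (simp add: cos_60)
    qed
    have "G m x0 + G m (-x0) = (\<Sum>k\<in>{m<..5*m}. g k x0 + g k (-x0))"
      unfolding G_def by (simp add: sum.distrib)
    also have "\<dots> = 2 * (\<Sum>k\<in>{m<..5*m}. of_real (cos (real k * x0)) * a k)"
      by (simp add: gsum sum_distrib_left)
    finally have eq: "G m x0 + G m (-x0) = 2 * (\<Sum>k\<in>{m<..5*m}. of_real (cos (real k * x0)) * a k)" .
    have "norm (G m x0 + G m (-x0)) \<le> 2 * E"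
      using norm_triangle_ineq[of "G m x0" "G m (-x0)"] that(2)[of x0] that(2)[of "-x0"] by simp
    then have N: "norm (\<Sum>k\<in>{m<..5*m}. of_real (cos (real k * x0)) * a k) \<le> E"
      unfolding eq by (simp add: norm_mult)
    have f1: "a k \<in> sector \<theta>0" if "k \<in> {m<..5*m}" for k
      using asec that by auto
    have f2: "cos (real k * x0) \<ge> 0" if "k \<in> {m<..5*m}" for k
      using cosk[OF that] by simp
    have S1: "cos \<theta>0 * (\<Sum>k\<in>{m<..5*m}. cos (real k * x0) * norm (a k)) \<le> norm (\<Sum>k\<in>{m<..5*m}. of_real (cos (real k * x0)) * a k)"
      by (rule sector_sum[OF assms(1) assms(2) f1 f2])
    have pw: "norm (a k) \<le> 2 * (cos (real k * x0) * norm (a k))" if "k \<in> {m<..5*m}" for k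
      using mult_right_mono[OF cosk[OF that], of "norm (a k)"] by simp
    have S2: "(\<Sum>k\<in>{m<..5*m}. norm (a k)) \<le> 2 * (\<Sum>k\<in>{m<..5*m}. cos (real k * x0) * norm (a k))"
      unfolding sum_distrib_left by (rule sum_mono) (rule pw)
    have "cos \<theta>0 * (\<Sum>k\<in>{m<..5*m}. norm (a k)) \<le> cos \<theta>0 * (2 * (\<Sum>k\<in>{m<..5*m}. cos (real k * x0) * norm (a k)))"
      using S2 c0 by (intro mult_left_mono) auto
    then show ?thesis using S1 N by linarith
  qed
  define C where "C = (1 + 2 / cos \<theta>0) / (2 * cos \<theta>1 * s0)"
  have Cpos: "C > 0" unfolding C_def using c0 c1 s0 by (intro divide_pos_pos add_pos_pos mult_pos_pos) auto
  have Tbound: "T m \<le> C * E" if "m \<ge> 1" "\<And>x. norm (G m x) \<le> E" for m E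
  proof -
    define x1 where "x1 = 1 / (5 * real m)"
    have m0: "real m > 0" using \<open>m \<ge> 1\<close> by simp
    have sink: "sin (real k * x1) \<ge> s0" if "k \<in> {m<..5*m}" for k
    proof -
      have e: "real k * x1 = real k / (5 * real m)" unfolding x1_def by simp
      have u: "real k * x1 \<le> 1" unfolding e using rk(2)[OF that] m0 by (simp add: field_simps)
      have l: "1/5 \<le> real k * x1" unfolding e using rk(1)[OF that] m0 by (simp add: field_simps)
      show ?thesis unfolding s0_def using pi_gt3 u l
        by (intro sin_monotone_2pi_le) auto
    qed
    have A: "cos \<theta>0 * (\<Sum>k\<in>{m<..5*m}. norm (a k)) \<le> 2 * E" by (rule Abound[OF that])
    then have A': "(\<Sum>k\<in>{m<..5*m}. norm (a k)) \<le> 2 * E / cos \<theta>0"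
      using c0 by (simp add: pos_le_divide_eq mult.commute)
    define X where "X = (\<Sum>k\<in>{m<..5*m}. of_real (sin (real k * x1)) * d k)"
    define Y where "Y = (\<Sum>k\<in>{m<..5*m}. a k * (of_real (cos (real k * x1)) - \<i> * of_real (sin (real k * x1))))"
    have eq: "G m x1 = Y + 2 * \<i> * X"
      unfolding G_def X_def Y_def by (simp add: gid sum.distrib sum_distrib_left)
    have n1: "norm Y \<le> (\<Sum>k\<in>{m<..5*m}. norm (a k))"
      unfolding Y_def by (rule order_trans[OF norm_sum]) (simp add: norm_mult norm_cs)
    have "2 * norm X = norm (2 * \<i> * X)" by (simp add: norm_mult)
    also have "2 * \<i> * X = G m x1 - Y" using eq by simp
    also have "norm (G m x1 - Y) \<le> norm (G m x1) + norm Y" by (rule norm_triangle_ineq4)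
    finally have B: "2 * norm X \<le> E + 2 * E / cos \<theta>0"
      using that(2)[of x1] n1 A' by linarith
    have f1: "d k \<in> sector \<theta>1" if "k \<in> {m<..5*m}" for k
      using th1(3) that by auto
    have f2: "sin (real k * x1) \<ge> 0" if "k \<in> {m<..5*m}" for k
      using sink[OF that] s0 by simp
    have S1: "cos \<theta>1 * (\<Sum>k\<in>{m<..5*m}. sin (real k * x1) * norm (d k)) \<le> norm X"
      unfolding X_def by (rule sector_sum[OF th1(1) th1(2) f1 f2])
    have pw: "s0 * norm (d k) \<le> sin (real k * x1) * norm (d k)" if "k \<in> {m<..5*m}" for k
      using mult_right_mono[OF sink[OF that], of "norm (d k)"] by simp
    have S2: "s0 * T m \<le> (\<Sum>k\<in>{m<..5*m}. sin (real k * x1) * norm (d k))"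
      unfolding T_def sum_distrib_left by (rule sum_mono) (rule pw)
    have "cos \<theta>1 * (s0 * T m) \<le> cos \<theta>1 * (\<Sum>k\<in>{m<..5*m}. sin (real k * x1) * norm (d k))"
      using S2 c1 by (intro mult_left_mono) auto
    then have "cos \<theta>1 * (s0 * T m) \<le> norm X" using S1 by linarith
    moreover have "2 * cos \<theta>1 * s0 * T m = 2 * (cos \<theta>1 * (s0 * T m))" by simp
    ultimately have "T m * (2 * cos \<theta>1 * s0) \<le> E + 2 * E / cos \<theta>0" using B
      by (simp only: mult.commute[of "T m"])
    then have "T m \<le> (E + 2 * E / cos \<theta>0) / (2 * cos \<theta>1 * s0)"
      using c1 s0 by (simp add: pos_le_divide_eq)
    also have "\<dots> = C * E" unfolding C_def using c0 c1 s0 by (simp add: field_simps)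
    finally show ?thesis .
  qed
  have Nbound: "real N * norm (d N) \<le> 4 * (K + 1) * T (N div 2)" if "N div 2 \<ge> 2" for N
  proof -
    define h where "h = N div 2"
    have h2: "h \<ge> 2" using that h_def by simp
    have hN: "N < 2 * h + 2" "2 * h \<le> N" unfolding h_def by presburger+
    have pt: "norm (d N) \<le> (K + 1) * (norm (d m) + norm (d (2*m)))" if "m \<in> {h<..N}" for m
    proof -
      have m1: "m \<ge> 1" "m \<le> N" "N \<le> 2*m" using that h2 hN by auto
      have "norm (d N) \<le> norm (d m) + (\<Sum>n\<in>{m..<N}. norm (d n - d (Suc n)))"
        by (rule telesc) (use m1 in simp)
      moreover have "(\<Sum>n\<in>{m..<N}. norm (d n - d (Suc n))) \<le> (\<Sum>n=m..2*m. norm (d n - d (Suc n)))"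
        by (rule sum_mono2) (use m1 in auto)
      moreover have "(\<Sum>n=m..2*m. norm (d n - d (Suc n))) \<le> K * (norm (d m) + norm (d (2*m)))" by (rule K(2)[OF m1(1)])
      moreover have "(K + 1) * (norm (d m) + norm (d (2*m))) = K * (norm (d m) + norm (d (2*m))) + norm (d m) + norm (d (2*m))"
        by (simp add: algebra_simps)
      moreover have "norm (d (2*m)) \<ge> 0" by simp
      ultimately show ?thesis by linarith
    qed
    have "real (card {h<..N}) * norm (d N) = (\<Sum>m\<in>{h<..N}. norm (d N))" by simp
    also have "\<dots> \<le> (\<Sum>m\<in>{h<..N}. (K + 1) * (norm (d m) + norm (d (2*m))))"
      by (rule sum_mono) (rule pt)
    also have "\<dots> = (K + 1) * ((\<Sum>m\<in>{h<..N}. norm (d m)) + (\<Sum>m\<in>{h<..N}. norm (d (2*m))))"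
      by (simp add: sum_distrib_left sum.distrib distrib_left)
    finally have P: "real (card {h<..N}) * norm (d N) \<le> (K + 1) * ((\<Sum>m\<in>{h<..N}. norm (d m)) + (\<Sum>m\<in>{h<..N}. norm (d (2*m))))" .
    have Q1: "(\<Sum>m\<in>{h<..N}. norm (d m)) \<le> T h"
      unfolding T_def by (rule sum_mono2) (use h2 hN in auto)
    have "(\<Sum>m\<in>{h<..N}. norm (d (2*m))) = (\<Sum>j\<in>(\<lambda>m. 2*m) ` {h<..N}. norm (d j))"
      by (subst sum.reindex) (auto simp: inj_on_def)
    also have "\<dots> \<le> T h"
      unfolding T_def by (rule sum_mono2) (use h2 hN in auto)
    finally have Q2: "(\<Sum>m\<in>{h<..N}. norm (d (2*m))) \<le> T h" .
    have "(K + 1) * ((\<Sum>m\<in>{h<..N}. norm (d m)) + (\<Sum>m\<in>{h<..N}. norm (d (2*m)))) \<le> (K + 1) * (T h + T h)"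
      using Q1 Q2 K(1) by (intro mult_left_mono) auto
    with P have P2: "real (card {h<..N}) * norm (d N) \<le> (K + 1) * (T h + T h)" by linarith
    have "N \<le> 2 * card {h<..N}" using hN by simp
    then have "real N \<le> 2 * real (card {h<..N})" by linarith
    then have "real N * norm (d N) \<le> 2 * real (card {h<..N}) * norm (d N)"
      by (intro mult_right_mono) auto
    with P2 have "real N * norm (d N) \<le> 2 * ((K + 1) * (T h + T h))" by linarith
    then show ?thesis unfolding h_def by (simp add: algebra_simps)
  qed
  show ?thesis
    unfolding LIMSEQ_iff
  proof (intro allI impI)
    fix r :: real assume r: "r > 0"
    define E where "E = r / (8 * (K + 1) * C)"
    have E: "E > 0" unfolding E_def using r K(1) Cpos by simp
    obtain N0 where N0: "\<And>m x. m \<ge> N0 \<Longrightarrow> norm (G m x) \<le> E" using Gsmall[OF E] by blast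
    have "norm (of_nat N * c (int N) - 0) < r" if "N \<ge> 2 * N0 + 4" for N
    proof -
      have hN: "N div 2 \<ge> N0" "N div 2 \<ge> 2" using that by auto
      have 1: "real N * norm (d N) \<le> 4 * (K + 1) * T (N div 2)" by (rule Nbound[OF hN(2)])
      have "T (N div 2) \<le> C * E" by (rule Tbound) (use hN N0 in auto)
      then have 2: "4 * (K + 1) * T (N div 2) \<le> 4 * (K + 1) * (C * E)"
        using K(1) by (intro mult_left_mono) auto
      have 3: "4 * (K + 1) * (C * E) = r / 2" unfolding E_def using K(1) Cpos mult_pos_pos[of "8*(K+1)" C] by (simp add: field_simps)
      have "real N * norm (d N) < r" using 1 2 3 r by linarith
      then show ?thesis unfolding d_def by (simp add: norm_mult)
    qed
    then show "\<exists>no. \<forall>n\<ge>no. norm (of_nat n * c (int n) - 0) < r" by blast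
  qed
qed

end
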